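(* There exists an algorithm that, given any set $A$ of $N$ elements and an integer $h \in \{0,\dots,N\}$, returns a set chosen uniformly at random among all subsets of $A$ with exactly $h$ elements. The algorithm requires $O(N)$ time and at most $60N$ random bits with probability at least $1 - O\left(e^{-\sqrt{N}}\right)$.
   Context: The algorithm has access to a source of independent unbiased random bits. *)

theory Defs
  imports "HOL-Probability.Probability"
begin

text \<open>A unit-cost word-RAM with a random-bit instruction.
  Memory is a map from addresses to natural numbers; direct operands are
  addresses, indirect access goes through the contents of a cell.\<close>

datatype instr =
    Const nat nat
  | Add nat nat nat
  | Sub nat nat nat          (* M[r] := M[a] - M[b]  (truncated) *)
  | Mul nat nat nat
  | Div nat nat nat
  | Mod nat nat nat
  | Load nat nat
  | Store nat nat
  | Jz nat nat
  | Rand nat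
  | Halt

type_synonym prog = "instr list"

text \<open>Configuration: program counter, memory, number of random bits consumed.\<close>
type_synonym config = "nat \<times> (nat \<Rightarrow> nat) \<times> nat"

definition halted :: "prog \<Rightarrow> config \<Rightarrow> bool" where
  "halted p c = (fst c \<ge> length p \<or> p ! fst c = Halt)"

fun exec :: "instr \<Rightarrow> (nat \<Rightarrow> bool) \<Rightarrow> config \<Rightarrow> config" where
  "exec (Const r v) \<omega> (pc, m, k) = (Suc pc, m(r := v), k)"
| "exec (Add r a b) \<omega> (pc, m, k) = (Suc pc, m(r := m a + m b), k)"
| "exec (Sub r a b) \<omega> (pc, m, k) = (Suc pc, m(r := m a - m b), k)"
| "exec (Mul r a b) \<omega> (pc, m, k) = (Suc pc, m(r := m a * m b), k)"
| "exec (Div r a b) \<omega> (pc, m, k) = (Suc pc, m(r := m a div m b), k)"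
| "exec (Mod r a b) \<omega> (pc, m, k) = (Suc pc, m(r := m a mod m b), k)"
| "exec (Load r a) \<omega> (pc, m, k) = (Suc pc, m(r := m (m a)), k)"
| "exec (Store a b) \<omega> (pc, m, k) = (Suc pc, m(m a := m b), k)"
| "exec (Jz r l) \<omega> (pc, m, k) = ((if m r = 0 then l else Suc pc), m, k)"
| "exec (Rand r) \<omega> (pc, m, k) = (Suc pc, m(r := (if \<omega> k then 1 else 0)), Suc k)"
| "exec Halt \<omega> c = c"

definition step :: "prog \<Rightarrow> (nat \<Rightarrow> bool) \<Rightarrow> config \<Rightarrow> config" where
  "step p \<omega> c = (if halted p c then c else exec (p ! fst c) \<omega> c)"

text \<open>Input convention: M[0] = N, M[1] = h, all other cells 0; the ground set
  A is represented by the indices 0,...,N-1.\<close>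
definition init_config :: "nat \<Rightarrow> nat \<Rightarrow> config" where
  "init_config N h = (0, (\<lambda>_. 0)(0 := N, 1 := h), 0)"

definition run :: "prog \<Rightarrow> (nat \<Rightarrow> bool) \<Rightarrow> nat \<Rightarrow> nat \<Rightarrow> nat \<Rightarrow> config" where
  "run p \<omega> N h t = (step p \<omega> ^^ t) (init_config N h)"

text \<open>Output convention on halting: M[0] = number c of ram_output entries,
  M[1],...,M[c] the entries; the ram_output is the set of these entries.\<close>
definition ram_output :: "config \<Rightarrow> nat set" where
  "ram_output c = (let m = fst (snd c) in (\<lambda>i. m (Suc i)) ` {..<m 0})"

definition bits_used :: "config \<Rightarrow> nat" where
  "bits_used c = snd (snd c)"

text \<open>Word-RAM restriction: every memory word stays bounded by a fixed
  polynomial in N, i.e. words have O(log N) bits.\<close>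
definition word_bounded :: "prog \<Rightarrow> nat \<Rightarrow> bool" where
  "word_bounded p d = (\<forall>N h \<omega> t a. h \<le> N \<longrightarrow> fst (snd (run p \<omega> N h t)) a \<le> (N + 2) ^ d)"

definition coins :: "(nat \<Rightarrow> bool) measure" where
  "coins = PiM UNIV (\<lambda>_. measure_pmf (pmf_of_set (UNIV :: bool set)))"

end

theory Submission
  imports Defs
begin

definition exe :: "prog \<Rightarrow> (nat \<Rightarrow> bool) \<Rightarrow> config \<Rightarrow> nat \<Rightarrow> config" where
  "exe p \<omega> c t = (step p \<omega> ^^ t) c"

definition addc :: "config \<Rightarrow> config" where
  "addc c = (fst c, fst (snd c), Suc (snd (snd c)))"

definition V :: "prog \<Rightarrow> (config \<Rightarrow> bool) \<Rightarrow> config \<Rightarrow> real" where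
  "V p Q c = measure coins {\<omega> \<in> space coins. \<exists>t. Q (exe p \<omega> c t)}"

lemma halted_addc[simp]: "halted p (addc c) = halted p c"
  by (simp add: halted_def addc_def)

lemma step_addc: "step p \<omega> (addc c) = addc (step p (\<lambda>i. \<omega> (Suc i)) c)"
proof -
  obtain pc m k where c: "c = (pc, m, k)" by (cases c) auto
  show ?thesis
    by (cases "p ! pc") (auto simp: c step_def addc_def halted_def)
qed

lemma exe_0[simp]: "exe p \<omega> c 0 = c" by (simp add: exe_def)

lemma exe_Suc: "exe p \<omega> c (Suc t) = exe p \<omega> (step p \<omega> c) t"
  by (simp only: exe_def funpow_Suc_right comp_def)

lemma exe_add: "exe p \<omega> c (j + t) = exe p \<omega> (exe p \<omega> c j) t"
  by (simp only: exe_def add.commute[of j] funpow_add comp_def)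

lemma exe_addc: "exe p \<omega> (addc c) t = addc (exe p (\<lambda>i. \<omega> (Suc i)) c t)"
  by (induction t arbitrary: c) (simp_all add: exe_Suc step_addc)

lemma step_dep: "step p \<omega> c = step p (\<lambda>_. \<omega> (snd (snd c))) c"
proof -
  obtain pc m k where c: "c = (pc, m, k)" by (cases c) auto
  show ?thesis
    by (cases "p ! pc") (auto simp: c step_def halted_def)
qed

lemma step_if: "step p \<omega> c = (if \<omega> (snd (snd c)) then step p (\<lambda>_. True) c else step p (\<lambda>_. False) c)"
  by (cases "\<omega> (snd (snd c))") (simp_all add: step_dep[of p \<omega> c])

lemma space_coins[simp]: "space coins = UNIV"
  by (simp add: coins_def space_PiM)

lemma sets_coord: "{\<omega>. \<omega> k} \<in> sets coins"
proof -
  have "(\<lambda>\<omega>. \<omega> k) \<in> measurable coins (measure_pmf (pmf_of_set (UNIV::bool set)))"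
    unfolding coins_def by (rule measurable_component_singleton) simp
  hence "(\<lambda>\<omega>. \<omega> k) -` {True} \<inter> space coins \<in> sets coins"
    by (rule measurable_sets) simp
  thus ?thesis by (simp add: vimage_def)
qed

lemma sets_exe: "{\<omega>. P (exe p \<omega> c t)} \<in> sets coins"
proof (induction t arbitrary: c)
  case 0
  then show ?case using sets.top[of coins] by (cases "P c") auto
next
  case (Suc t)
  let ?k = "snd (snd c)"
  have "{\<omega>. P (exe p \<omega> c (Suc t))} =
    ({\<omega>. \<omega> ?k} \<inter> {\<omega>. P (exe p \<omega> (step p (\<lambda>_. True) c) t)}) \<union>
    (- {\<omega>. \<omega> ?k} \<inter> {\<omega>. P (exe p \<omega> (step p (\<lambda>_. False) c) t)})"
    (is "_ = ?R") by (rule set_eqI, subst exe_Suc, subst step_if) auto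
  moreover have "- {\<omega>. \<omega> ?k} \<in> sets coins"
    using sets.compl_sets[OF sets_coord[of ?k]] by (simp add: Compl_eq_Diff_UNIV)
  hence "?R \<in> sets coins"
    using Suc sets_coord[of ?k]
    by (intro sets.Un sets.Int) auto
  ultimately show ?case by simp
qed

lemma sets_V: "{\<omega>. \<exists>t. Q (exe p \<omega> c t)} \<in> sets coins"
proof -
  have "{\<omega>. \<exists>t. Q (exe p \<omega> c t)} = (\<Union>t. {\<omega>. Q (exe p \<omega> c t)})" by auto
  also have "\<dots> \<in> sets coins" using sets_exe by blast
  finally show ?thesis .
qed

interpretation CS: sequence_space "measure_pmf (pmf_of_set (UNIV::bool set))"
  by unfold_locales

lemma coins_eq: "coins = CS.S" by (simp add: coins_def)

lemma prob_coins: "prob_space coins"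
  unfolding coins_eq by (rule CS.prob_space_axioms)

lemma coin_split_e:
  assumes E: "E \<in> sets coins"
  shows "emeasure coins E = (emeasure coins {\<omega>. case_nat True \<omega> \<in> E} + emeasure coins {\<omega>. case_nat False \<omega> \<in> E}) / 2"
proof -
  let ?M = "measure_pmf (pmf_of_set (UNIV::bool set))"
  have meas: "(\<lambda>(s, \<omega>). case_nat s \<omega>) \<in> measurable (?M \<Otimes>\<^sub>M CS.S) CS.S"
    by measurable
  have "emeasure coins E = emeasure (distr (?M \<Otimes>\<^sub>M CS.S) CS.S (\<lambda>(s, \<omega>). case_nat s \<omega>)) E"
    by (simp add: CS.PiM_iter coins_eq)
  also have "\<dots> = emeasure (?M \<Otimes>\<^sub>M CS.S) ((\<lambda>(s, \<omega>). case_nat s \<omega>) -` E \<inter> space (?M \<Otimes>\<^sub>M CS.S))"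
    using E meas by (simp add: emeasure_distr coins_eq)
  also have "\<dots> = \<integral>\<^sup>+ s. emeasure CS.S (Pair s -` ((\<lambda>(s, \<omega>). case_nat s \<omega>) -` E \<inter> space (?M \<Otimes>\<^sub>M CS.S))) \<partial>?M"
    apply (rule CS.emeasure_pair_measure_alt)
    using E meas by (simp add: coins_eq measurable_sets)
  also have "\<dots> = \<integral>\<^sup>+ s. emeasure coins {\<omega>. case_nat s \<omega> \<in> E} \<partial>?M"
    by (intro nn_integral_cong) (simp add: coins_eq[symmetric] space_pair_measure vimage_def)
  also have "\<dots> = (emeasure coins {\<omega>. case_nat True \<omega> \<in> E} + emeasure coins {\<omega>. case_nat False \<omega> \<in> E}) / 2"
    by (simp add: nn_integral_pmf_of_set UNIV_bool add.commute)
  finally show ?thesis .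
qed

lemma V_alt: "V p Q c = measure coins {\<omega>. \<exists>t. Q (exe p \<omega> c t)}"
  by (simp add: V_def)

lemma V_nonneg: "0 \<le> V p Q c" by (simp add: V_def)

lemma V_le1: "V p Q c \<le> 1"
  unfolding V_def by (rule prob_space.prob_le_1[OF prob_coins])

lemma exe_halted: "halted p c \<Longrightarrow> exe p \<omega> c t = c"
  by (induction t) (simp_all add: exe_Suc step_def)

lemma V_halted: assumes "halted p c" shows "V p Q c = (if Q c then 1 else 0)"
proof -
  have "{\<omega> \<in> space coins. \<exists>t. Q (exe p \<omega> c t)} = (if Q c then space coins else {})"
    using assms by (auto simp: exe_halted)
  thus ?thesis unfolding V_def using prob_space.prob_space[OF prob_coins] by simp
qed

lemma ex_exe: "(\<exists>t. Q (exe p \<omega> c t)) \<longleftrightarrow> Q c \<or> (\<exists>t. Q (exe p \<omega> (step p \<omega> c) t))"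
proof
  assume "\<exists>t. Q (exe p \<omega> c t)"
  then obtain t where "Q (exe p \<omega> c t)" by blast
  thus "Q c \<or> (\<exists>t. Q (exe p \<omega> (step p \<omega> c) t))"
    by (cases t) (auto simp: exe_Suc)
next
  assume "Q c \<or> (\<exists>t. Q (exe p \<omega> (step p \<omega> c) t))"
  thus "\<exists>t. Q (exe p \<omega> c t)"
    by (metis exe_0 exe_Suc)
qed

lemma V_det:
  assumes "pc \<in> D" "\<not> Q (pc, m, 0)" "\<forall>r. p ! pc \<noteq> Rand r"
  shows "V p Q (pc, m, 0) = V p Q (step p (\<lambda>_. False) (pc, m, 0))"
proof -
  define c' where "c' = step p (\<lambda>_. False) (pc, m, 0)"
  have st: "step p \<omega> (pc, m, 0) = c'" for \<omega>
    unfolding c'_def using assms(3) by (cases "p ! pc") (auto simp: step_def)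
  show ?thesis unfolding V_def c'_def[symmetric]
    by (subst ex_exe) (simp add: st assms(2))
qed

lemma coin_split:
  assumes E: "E \<in> sets coins"
  shows "measure coins E = (measure coins {\<omega>. case_nat True \<omega> \<in> E} + measure coins {\<omega>. case_nat False \<omega> \<in> E}) / 2"
proof -
  interpret P: prob_space coins by (rule prob_coins)
  have "ennreal (measure coins E) = (ennreal (measure coins {\<omega>. case_nat True \<omega> \<in> E}) + ennreal (measure coins {\<omega>. case_nat False \<omega> \<in> E})) / 2"
    using coin_split_e[OF E] by (simp add: P.emeasure_eq_measure)
  also have "\<dots> = ennreal ((measure coins {\<omega>. case_nat True \<omega> \<in> E} + measure coins {\<omega>. case_nat False \<omega> \<in> E}) / 2)"
    by (simp add: ennreal_plus[symmetric] divide_ennreal[symmetric] del: ennreal_plus)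
  finally show ?thesis by (simp add: ennreal_inj)
qed

lemma V_rand:
  assumes "p ! pc = Rand r" "pc < length p" "\<not> Q (pc, m, 0)"
  shows "V p Q (pc, m, 0) = (V p (Q \<circ> addc) (Suc pc, m(r := 1), 0) + V p (Q \<circ> addc) (Suc pc, m(r := 0), 0)) / 2"
proof -
  have nh: "\<not> halted p (pc, m, 0)" using assms by (simp add: halted_def)
  have key: "case_nat b \<omega> \<in> {\<omega>. \<exists>t. Q (exe p \<omega> (pc, m, 0) t)} \<longleftrightarrow>
     (\<exists>t. (Q \<circ> addc) (exe p \<omega> (Suc pc, m(r := (if b then 1 else 0)), 0) t))" for b \<omega>
  proof -
    have "step p (case_nat b \<omega>) (pc, m, 0) = addc (Suc pc, m(r := (if b then 1 else 0)), 0)"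
      using nh assms(1) by (simp add: step_def addc_def)
    moreover have "(\<lambda>i. case_nat b \<omega> (Suc i)) = \<omega>" by simp
    ultimately show ?thesis
      by (subst mem_Collect_eq, subst ex_exe) (simp add: assms(3) exe_addc)
  qed
  show ?thesis
    unfolding V_alt
    by (subst coin_split[OF sets_V]) (simp add: key del: mem_Collect_eq)
qed

definition prog :: prog where
  "prog = [Const 4 7, Jz 0 27, Jz 1 22, Sub 5 0 1, Jz 5 18, Const 3 0, Add 3 3 1, Add 3 3 3, Rand 6, Sub 5 0 3, Jz 5 14, Jz 6 7, Const 5 0, Jz 5 22, Sub 3 3 0, Jz 6 18, Const 5 0, Jz 5 7, Store 4 2, Const 5 1, Add 4 4 5, Sub 1 1 5, Const 5 1, Add 2 2 5, Sub 0 0 5, Const 5 0, Jz 5 1, Const 5 7, Sub 6 4 5, Jz 6 40, Const 5 1, Sub 0 4 5, Const 5 7, Load 1 5, Load 2 5, Load 3 5, Load 4 5, Load 6 5, Load 5 5, Halt, Const 0 0, Halt]"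

lemma length_prog[simp]: "length prog = 42" by (simp add: prog_def)

lemma prog_nth[simp]:
  "prog ! 0 = Const 4 7"
  "prog ! 1 = Jz 0 27"
  "prog ! 2 = Jz 1 22"
  "prog ! 3 = Sub 5 0 1"
  "prog ! 4 = Jz 5 18"
  "prog ! 5 = Const 3 0"
  "prog ! 6 = Add 3 3 1"
  "prog ! 7 = Add 3 3 3"
  "prog ! 8 = Rand 6"
  "prog ! 9 = Sub 5 0 3"
  "prog ! 10 = Jz 5 14"
  "prog ! 11 = Jz 6 7"
  "prog ! 12 = Const 5 0"
  "prog ! 13 = Jz 5 22"
  "prog ! 14 = Sub 3 3 0"
  "prog ! 15 = Jz 6 18"
  "prog ! 16 = Const 5 0"
  "prog ! 17 = Jz 5 7"
  "prog ! 18 = Store 4 2"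
  "prog ! 19 = Const 5 1"
  "prog ! 20 = Add 4 4 5"
  "prog ! 21 = Sub 1 1 5"
  "prog ! 22 = Const 5 1"
  "prog ! 23 = Add 2 2 5"
  "prog ! 24 = Sub 0 0 5"
  "prog ! 25 = Const 5 0"
  "prog ! 26 = Jz 5 1"
  "prog ! 27 = Const 5 7"
  "prog ! 28 = Sub 6 4 5"
  "prog ! 29 = Jz 6 40"
  "prog ! 30 = Const 5 1"
  "prog ! 31 = Sub 0 4 5"
  "prog ! 32 = Const 5 7"
  "prog ! 33 = Load 1 5"
  "prog ! 34 = Load 2 5"
  "prog ! 35 = Load 3 5"
  "prog ! 36 = Load 4 5"
  "prog ! 37 = Load 6 5"
  "prog ! 38 = Load 5 5"
  "prog ! 39 = Halt"
  "prog ! 40 = Const 0 0"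
  "prog ! 41 = Halt"
  by (simp_all add: prog_def)

lemma prog_nth_Suc0[simp]: "prog ! Suc 0 = Jz 0 27" by (simp add: prog_def)

definition LI :: "nat \<Rightarrow> nat \<Rightarrow> nat \<Rightarrow> nat \<Rightarrow> nat \<Rightarrow> nat set \<Rightarrow> (nat \<Rightarrow> nat) \<Rightarrow> bool" where
  "LI N h n k cnt T m \<longleftrightarrow> m 0 = n \<and> m 1 = k \<and> m 2 = N - n \<and> n \<le> N \<and> k \<le> n \<and> m 4 = 7 + cnt \<and>
     cnt + k = h \<and> T = (\<lambda>j. m (7 + j)) ` {..<cnt} \<and> card T = cnt \<and> T \<subseteq> {..<N - n}"

definition BLI :: "nat \<Rightarrow> nat \<Rightarrow> nat \<Rightarrow> nat \<Rightarrow> nat \<Rightarrow> nat set \<Rightarrow> nat \<Rightarrow> (nat \<Rightarrow> nat) \<Rightarrow> bool" where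
  "BLI N h n k cnt T r m \<longleftrightarrow> LI N h n k cnt T m \<and> 0 < k \<and> k < n \<and> m 3 = r \<and> r < n"

lemma LI_upd_low:
  assumes "LI N h n k cnt T m" "a = 3 \<or> a = 5 \<or> a = 6"
  shows "LI N h n k cnt T (m(a := v))"
proof -
  have "(\<lambda>j. (m(a := v)) (7 + j)) = (\<lambda>j. m (7 + j))" using assms(2) by auto
  thus ?thesis using assms(1,2) unfolding LI_def by auto
qed

context
  fixes Q :: "config \<Rightarrow> bool"
  assumes hQ: "\<And>pc m. \<not> halted prog (pc, m, 0) \<Longrightarrow> \<not> Q (pc, m, 0)"
begin

lemma hQ': "\<not> halted prog (pc, m, 0) \<Longrightarrow> Q (pc, m, 0) = False"
  using hQ by blast

lemmas chain_simps = hQ' halted_def step_def numeral_2_eq_2[symmetric]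

lemma T_init: "V prog Q (0, (\<lambda>_. 0)(0 := N, 1 := h), 0) = V prog Q (1, (\<lambda>_. 0)(0 := N, 1 := h, 4 := 7), 0)"
  by (simp add: V_det[where D="{0}"] chain_simps)

lemma T_loop_bl:
  assumes "LI N h n k cnt T m" "0 < k" "k < n"
  shows "V prog Q (1, m, 0) = V prog Q (7, m(5 := n - k, 3 := k), 0)"
  using assms by (simp add: V_det[where D="{1,2,3,4,5,6}"] chain_simps LI_def)

lemma T_loop_sel:
  assumes "LI N h n k cnt T m" "0 < n" "k = n"
  shows "V prog Q (1, m, 0) = V prog Q (18, m(5 := 0), 0)"
  using assms by (simp add: V_det[where D="{1,2,3,4}"] chain_simps LI_def)

lemma T_loop_skip:
  assumes "LI N h n k cnt T m" "0 < n" "k = 0"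
  shows "V prog Q (1, m, 0) = V prog Q (22, m, 0)"
  using assms by (simp add: V_det[where D="{1,2}"] chain_simps LI_def)

lemma T_sel:
  assumes "LI N h n k cnt T m" "0 < k"
  shows "V prog Q (18, m, 0) = V prog Q (1, m(7 + cnt := N - n, 5 := 1, 4 := 8 + cnt, 1 := k - 1, 5 := 1, 2 := N - n + 1, 0 := n - 1, 5 := 0), 0)"
  using assms by (simp add: V_det[where D="{18,19,20,21,22,23,24,25,26}"] chain_simps LI_def)

lemma T_skip:
  assumes "LI N h n k cnt T m" "k < n"
  shows "V prog Q (22, m, 0) = V prog Q (1, m(5 := 1, 2 := N - n + 1, 0 := n - 1, 5 := 0), 0)"
  using assms by (simp add: V_det[where D="{22,23,24,25,26}"] chain_simps LI_def)

lemma T_bl: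
  assumes "BLI N h n k cnt T r m"
  shows "V prog Q (7, m, 0) = (V prog (Q \<circ> addc) (9, m(3 := r + r, 6 := 1), 0) + V prog (Q \<circ> addc) (9, m(3 := r + r, 6 := 0), 0)) / 2"
proof -
  have "V prog Q (7, m, 0) = V prog Q (8, m(3 := r + r), 0)"
    using assms by (simp add: V_det[where D="{7}"] chain_simps BLI_def)
  also have "\<dots> = (V prog (Q \<circ> addc) (9, m(3 := r + r, 6 := 1), 0) + V prog (Q \<circ> addc) (9, m(3 := r + r, 6 := 0), 0)) / 2"
    by (subst V_rand[where r=6]) (simp_all add: chain_simps)
  finally show ?thesis .
qed

lemma T_9a:
  assumes "m 0 = n" "m 3 = r + r" "n \<le> r + r" "m 6 = 0"
  shows "V prog Q (9, m, 0) = V prog Q (18, m(5 := 0, 3 := r + r - n), 0)"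
  using assms by (simp add: V_det[where D="{9,10,14,15}"] chain_simps)

lemma T_9b:
  assumes "m 0 = n" "m 3 = r + r" "n \<le> r + r" "m 6 = 1"
  shows "V prog Q (9, m, 0) = V prog Q (7, m(5 := 0, 3 := r + r - n, 5 := 0), 0)"
  using assms by (simp add: V_det[where D="{9,10,14,15,16,17}"] chain_simps)

lemma T_9c:
  assumes "m 0 = n" "m 3 = r + r" "r + r < n" "m 6 = 0"
  shows "V prog Q (9, m, 0) = V prog Q (7, m(5 := n - (r + r)), 0)"
  using assms by (simp add: V_det[where D="{9,10,11}"] chain_simps)

lemma T_9d:
  assumes "m 0 = n" "m 3 = r + r" "r + r < n" "m 6 = 1"
  shows "V prog Q (9, m, 0) = V prog Q (22, m(5 := 0), 0)"
  using assms by (simp add: V_det[where D="{9,10,11,12,13}"] chain_simps)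

lemma T_done0:
  assumes "LI N h 0 k cnt T m" "cnt = 0"
  shows "V prog Q (1, m, 0) = V prog Q (41, m(5 := 7, 6 := 0, 0 := 0), 0)"
  using assms by (simp add: V_det[where D="{1,27,28,29,40}"] chain_simps LI_def)

lemma T_done1:
  assumes "LI N h 0 k cnt T m" "cnt > 0"
  shows "V prog Q (1, m, 0) = V prog Q (39, m(5 := 7, 6 := cnt, 5 := 1, 0 := 6 + cnt, 5 := 7,
     1 := m 7, 2 := m 7, 3 := m 7, 4 := m 7, 6 := m 7, 5 := m 7), 0)"
  using assms by (simp add: V_det[where D="{1,27,28,29,30,31,32,33,34,35,36,37,38}"] chain_simps LI_def)

end

lemma LI_sel:
  assumes "LI N h n k cnt T m" "0 < k"
  shows "LI N h (n - 1) (k - 1) (Suc cnt) (insert (N - n) T)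
     (m(7 + cnt := N - n, 5 := 1, 4 := 8 + cnt, 1 := k - 1, 5 := 1, 2 := N - n + 1, 0 := n - 1, 5 := 0))"
    (is "LI _ _ _ _ _ _ ?m")
proof -
  from assms have L: "m 0 = n" "m 1 = k" "m 2 = N - n" "n \<le> N" "k \<le> n" "m 4 = 7 + cnt"
    "cnt + k = h" "T = (\<lambda>j. m (7 + j)) ` {..<cnt}" "card T = cnt" "T \<subseteq> {..<N - n}"
    by (auto simp: LI_def)
  have img: "(\<lambda>j. ?m (7 + j)) ` {..<Suc cnt} = insert (N - n) T"
  proof -
    have "(\<lambda>j. ?m (7 + j)) ` {..<Suc cnt} = insert (?m (7 + cnt)) ((\<lambda>j. ?m (7 + j)) ` {..<cnt})"
      by (simp only: lessThan_Suc image_insert)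
    also have "(\<lambda>j. ?m (7 + j)) ` {..<cnt} = (\<lambda>j. m (7 + j)) ` {..<cnt}"
      by (rule image_cong[OF refl]) auto
    finally show ?thesis using L by simp
  qed
  have nin: "N - n \<notin> T" using L by auto
  have fin: "finite T" using L by simp
  show ?thesis unfolding LI_def
    using L img nin fin assms(2) by auto
qed

lemma LI_skip:
  assumes "LI N h n k cnt T m" "k < n"
  shows "LI N h (n - 1) k cnt T (m(5 := 1, 2 := N - n + 1, 0 := n - 1, 5 := 0))"
    (is "LI _ _ _ _ _ _ ?m")
proof -
  from assms have L: "m 0 = n" "m 1 = k" "m 2 = N - n" "n \<le> N" "k \<le> n" "m 4 = 7 + cnt"
    "cnt + k = h" "T = (\<lambda>j. m (7 + j)) ` {..<cnt}" "card T = cnt" "T \<subseteq> {..<N - n}"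
    by (auto simp: LI_def)
  have img: "(\<lambda>j. ?m (7 + j)) ` {..<cnt} = T"
    using L by (subst L(8), intro image_cong[OF refl]) auto
  show ?thesis unfolding LI_def
    using L img assms(2) by auto
qed

lemma BLI_start:
  assumes "LI N h n k cnt T m" "0 < k" "k < n"
  shows "BLI N h n k cnt T k (m(5 := n - k, 3 := k))"
  unfolding BLI_def by (intro conjI LI_upd_low assms(1)) (use assms in \<open>auto simp: LI_def\<close>)

lemma BL_step:
  assumes hQ: "\<And>pc m. \<not> halted prog (pc, m, 0) \<Longrightarrow> \<not> Q (pc, m, 0)"
    and hQ2: "\<And>pc m. \<not> halted prog (pc, m, 0) \<Longrightarrow> \<not> (Q \<circ> addc) (pc, m, 0)"
    and B: "BLI N h n k cnt T r m"
  shows "\<exists>m1 m2. LI N h n k cnt T m1 \<and> BLI N h n k cnt T (if n \<le> r + r then r + r - n else r + r) m2 \<and>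
     V prog Q (7, m, 0) = (V prog (Q \<circ> addc) (if n \<le> r + r then 18 else 22, m1, 0) + V prog (Q \<circ> addc) (7, m2, 0)) / 2"
proof -
  from B have L: "LI N h n k cnt T m" "0 < k" "k < n" "m 3 = r" "r < n" "m 0 = n"
    by (auto simp: BLI_def LI_def)
  let ?m1 = "m(3 := r + r, 6 := 1)" and ?m0 = "m(3 := r + r, 6 := 0)"
  have L1: "LI N h n k cnt T ?m1" and L0: "LI N h n k cnt T ?m0"
    by (intro LI_upd_low L(1); simp)+
  have eq: "V prog Q (7, m, 0) = (V prog (Q \<circ> addc) (9, ?m1, 0) + V prog (Q \<circ> addc) (9, ?m0, 0)) / 2"
    by (rule T_bl[where Q=Q, OF hQ B])
  show ?thesis
  proof (cases "n \<le> r + r")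
    case True
    have a: "V prog (Q \<circ> addc) (9, ?m0, 0) = V prog (Q \<circ> addc) (18, ?m0(5 := 0, 3 := r + r - n), 0)"
      by (rule T_9a[where Q="Q \<circ> addc", OF hQ2]) (use L True in auto)
    have b: "V prog (Q \<circ> addc) (9, ?m1, 0) = V prog (Q \<circ> addc) (7, ?m1(5 := 0, 3 := r + r - n, 5 := 0), 0)"
      by (rule T_9b[where Q="Q \<circ> addc", OF hQ2]) (use L True in auto)
    have La: "LI N h n k cnt T (?m0(5 := 0, 3 := r + r - n))"
      by (intro LI_upd_low L(1)) auto
    have Lb: "BLI N h n k cnt T (r + r - n) (?m1(5 := 0, 3 := r + r - n, 5 := 0))"
      unfolding BLI_def by (intro conjI LI_upd_low L(1)) (use L True in auto)
    show ?thesis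
      using True La Lb eq a b by (intro exI[of _ "?m0(5 := 0, 3 := r + r - n)"] exI[of _ "?m1(5 := 0, 3 := r + r - n, 5 := 0)"]) auto
  next
    case False
    have c: "V prog (Q \<circ> addc) (9, ?m0, 0) = V prog (Q \<circ> addc) (7, ?m0(5 := n - (r + r)), 0)"
      by (rule T_9c[where Q="Q \<circ> addc", OF hQ2]) (use L False in auto)
    have d: "V prog (Q \<circ> addc) (9, ?m1, 0) = V prog (Q \<circ> addc) (22, ?m1(5 := 0), 0)"
      by (rule T_9d[where Q="Q \<circ> addc", OF hQ2]) (use L False in auto)
    have Lc: "BLI N h n k cnt T (r + r) (?m0(5 := n - (r + r)))"
      unfolding BLI_def by (intro conjI LI_upd_low L(1)) (use L False in auto)
    have Ld: "LI N h n k cnt T (?m1(5 := 0))"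
      by (intro LI_upd_low L(1)) auto
    show ?thesis
      using False Lc Ld eq c d by (intro exI[of _ "?m1(5 := 0)"] exI[of _ "?m0(5 := n - (r + r))"]) auto
  qed
qed

lemma out_done0: "ram_output (41, m(5 := 7, 6 := 0, 0 := 0), 0) = {}"
  by (simp add: ram_output_def)

lemma out_done1:
  assumes "LI N h 0 k cnt T m" "cnt > 0"
  shows "ram_output (39, m(5 := 7, 6 := cnt, 5 := 1, 0 := 6 + cnt, 5 := 7,
     1 := m 7, 2 := m 7, 3 := m 7, 4 := m 7, 6 := m 7, 5 := m 7), 0) = T"
    (is "ram_output (_, ?M, _) = _")
proof -
  from assms have T: "T = (\<lambda>j. m (7 + j)) ` {..<cnt}" by (simp add: LI_def)
  have M0: "?M 0 = 6 + cnt" by simp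
  have Ms: "?M (Suc i) = (if i < 6 then m 7 else m (Suc i))" for i
    by (auto simp: numeral_eq_Suc)
  have "(\<lambda>i. ?M (Suc i)) ` {..<6 + cnt} = T"
  proof
    show "(\<lambda>i. ?M (Suc i)) ` {..<6 + cnt} \<subseteq> T"
    proof
      fix x assume "x \<in> (\<lambda>i. ?M (Suc i)) ` {..<6 + cnt}"
      then obtain i where i: "i < 6 + cnt" "x = ?M (Suc i)" by blast
      show "x \<in> T"
      proof (cases "i < 6")
        case True
        then have "x = m (7 + 0)" using i Ms by simp
        then show ?thesis using T assms(2) by blast
      next
        case False
        then have "x = m (7 + (i - 6))" using i Ms by simp
        moreover have "i - 6 < cnt" using False i by simp
        ultimately show ?thesis using T by blast
      qed
    qed
  next
    show "T \<subseteq> (\<lambda>i. ?M (Suc i)) ` {..<6 + cnt}"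
    proof
      fix x assume "x \<in> T"
      then obtain j where j: "j < cnt" "x = m (7 + j)" using T by blast
      have "?M (Suc (6 + j)) = m (7 + j)" using Ms[of "6 + j"] by simp
      then show "x \<in> (\<lambda>i. ?M (Suc i)) ` {..<6 + cnt}" using j by (intro image_eqI[of _ _ "6 + j"]) auto
    qed
  qed
  thus ?thesis unfolding ram_output_def Let_def fst_conv snd_conv M0 .
qed

lemma done_exists:
  assumes hQ: "\<And>pc m. \<not> halted prog (pc, m, 0) \<Longrightarrow> \<not> Q (pc, m, 0)"
    and L: "LI N h 0 k cnt T m"
  shows "\<exists>c. halted prog c \<and> ram_output c = T \<and> snd (snd c) = 0 \<and> V prog Q (1, m, 0) = V prog Q c"
proof (cases "cnt = 0")
  case True
  have "T = {}" using L True by (simp add: LI_def)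
  then show ?thesis using T_done0[where Q=Q, OF hQ L True] out_done0
    by (intro exI[of _ "(41, m(5 := 7, 6 := 0, 0 := 0), 0)"]) (simp add: halted_def)
next
  case False
  then show ?thesis using T_done1[where Q=Q, OF hQ L] out_done1[OF L]
    by (intro exI[of _ "(39, m(5 := 7, 6 := cnt, 5 := 1, 0 := 6 + cnt, 5 := 7,
     1 := m 7, 2 := m 7, 3 := m 7, 4 := m 7, 6 := m 7, 5 := m 7), 0)"]) (simp add: halted_def)
qed

definition QS :: "nat set \<Rightarrow> config \<Rightarrow> bool" where
  "QS S c = (halted prog c \<and> ram_output c = S)"

lemma QS_hQ: "\<not> halted prog (pc, m, 0) \<Longrightarrow> \<not> QS S (pc, m, 0)"
  by (simp add: QS_def)

lemma QS_addc: "QS S \<circ> addc = QS S"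
  by (rule ext) (simp add: QS_def addc_def ram_output_def halted_def)

lemma QS_hQ2: "\<not> halted prog (pc, m, 0) \<Longrightarrow> \<not> (QS S \<circ> addc) (pc, m, 0)"
  by (simp add: QS_addc QS_hQ)

definition fS :: "nat \<Rightarrow> nat set \<Rightarrow> nat \<Rightarrow> nat \<Rightarrow> nat set \<Rightarrow> real" where
  "fS N S n k T = (if T = S \<inter> {..<N - n} then 1 / real (n choose k) else 0)"

lemma fS_ge0: "0 \<le> fS N S n k T" by (simp add: fS_def)

lemma fS_le1: "fS N S n k T \<le> 1"
proof -
  have "1 / real (n choose k) \<le> 1"
    by (cases "n choose k = 0") (auto simp: divide_le_eq Suc_le_eq)
  thus ?thesis by (simp add: fS_def)
qed

lemma set_ins_iff:
  assumes "T \<subseteq> {..<i}"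
  shows "insert i T = S \<inter> {..<Suc i} \<longleftrightarrow> T = S \<inter> {..<i} \<and> i \<in> S"
  using assms by (auto simp: lessThan_Suc)

lemma set_noins_iff:
  assumes "T \<subseteq> {..<i}"
  shows "T = S \<inter> {..<Suc i} \<longleftrightarrow> T = S \<inter> {..<i} \<and> i \<notin> S"
  using assms by (auto simp: lessThan_Suc)

lemma zero_by_bound:
  fixes x :: real
  assumes "\<And>j. \<bar>x\<bar> \<le> 2 / 2 ^ j"
  shows "x = 0"
proof (rule ccontr)
  assume "x \<noteq> 0"
  hence pos: "\<bar>x\<bar> > 0" by simp
  obtain j where j: "2 / \<bar>x\<bar> < 2 ^ j" using real_arch_pow[of 2 "2 / \<bar>x\<bar>"] by auto
  hence "2 / 2 ^ j < \<bar>x\<bar>" using pos by (simp add: divide_less_eq mult.commute)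
  thus False using assms[of j] by simp
qed

lemma alg1:
  fixes a x c1 c2 :: real
  assumes "(a - x) * c2 = a * c1" "c1 > 0" "c2 > 0" "a > 0"
  shows "(1 - x / a) * (1 / c1) = 1 / c2"
  using assms by (simp add: field_simps)

lemma alg2:
  fixes a x c1 c2 :: real
  assumes "a * c1 = c2 * x" "c1 > 0" "c2 > 0" "a > 0"
  shows "x / a * (1 / c1) = 1 / c2"
proof -
  have "c2 * x > 0" using assms(1,2,4) by (metis mult_pos_pos)
  hence "x > 0" using assms(3) by (simp add: zero_less_mult_iff)
  thus ?thesis using assms by (simp add: field_simps)
qed

lemma comb_mid:
  assumes T: "T \<subseteq> {..<i}" and k: "0 < k" "k < Suc n'"
  shows "real k / real (Suc n') * (if insert i T = S \<inter> {..<Suc i} then 1 / real (n' choose (k - 1)) else 0)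
       + (1 - real k / real (Suc n')) * (if T = S \<inter> {..<Suc i} then 1 / real (n' choose k) else 0)
       = (if T = S \<inter> {..<i} then 1 / real (Suc n' choose k) else 0)"
proof (cases "T = S \<inter> {..<i}")
  case True
  show ?thesis
  proof (cases "i \<in> S")
    case iS: True
    have i1: "insert i T = S \<inter> {..<Suc i}" using set_ins_iff[OF T] True iS by simp
    have i2: "\<not> (T = S \<inter> {..<Suc i})" using set_noins_iff[OF T] iS by simp
    obtain k' where k': "k = Suc k'" using k by (cases k) auto
    have e: "real (Suc n') * real (n' choose k') = real (Suc n' choose k) * real k"
      using Suc_times_binomial_eq[of n' k'] k' by (metis of_nat_mult)
    have km: "k - 1 = k'" using k' by simp
    have p1: "real (n' choose (k - 1)) > 0" using k km by simp
    have p2: "real (Suc n' choose k) > 0" using k by simp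
    have e': "real (Suc n') * real (n' choose (k - 1)) = real (Suc n' choose k) * real k"
      using e km by simp
    have "real k / real (Suc n') * (1 / real (n' choose (k - 1))) = 1 / real (Suc n' choose k)"
      by (rule alg2[OF e' p1 p2]) simp
    then show ?thesis
      by (simp only: if_P[OF i1] if_not_P[OF i2] if_P[OF True] mult_zero_right add_0_right)
  next
    case iS: False
    have i1: "\<not> (insert i T = S \<inter> {..<Suc i})" using set_ins_iff[OF T] iS by simp
    have i2: "T = S \<inter> {..<Suc i}" using set_noins_iff[OF T] True iS by simp
    have e: "real (Suc n' - k) * real (Suc n' choose k) = real (Suc n') * real (n' choose k)"
      using binomial_absorb_comp[of "Suc n'" k] by (metis diff_Suc_1 of_nat_mult)
    have p1: "real (n' choose k) > 0" using k by simp
    have p2: "real (Suc n' choose k) > 0" using k by simp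
    have d: "real (Suc n' - k) = real (Suc n') - real k" using k by (simp add: of_nat_diff)
    have "(1 - real k / real (Suc n')) * (1 / real (n' choose k)) = 1 / real (Suc n' choose k)"
      by (rule alg1[OF e[unfolded d] p1 p2]) simp
    then show ?thesis
      by (simp only: if_not_P[OF i1] if_P[OF i2] if_P[OF True] mult_zero_right add_0_left)
  qed
next
  case False
  then show ?thesis using T by (simp add: set_ins_iff set_noins_iff)
qed

lemma tgt_a:
  fixes A B r n :: real
  assumes "n > 0"
  shows "r / n * A + (1 - r / n) * B = (A + ((r + r - n) / n * A + (1 - (r + r - n) / n) * B)) / 2"
  using assms by (simp add: field_simps)

lemma tgt_b:
  fixes A B r n :: real
  assumes "n > 0"
  shows "r / n * A + (1 - r / n) * B = (B + ((r + r) / n * A + (1 - (r + r) / n) * B)) / 2"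
  using assms by (simp add: field_simps)

lemma uniform_loop:
  assumes S: "S \<subseteq> {..<N}" "card S = h"
  shows "LI N h n k cnt T m \<Longrightarrow> V prog (QS S) (1, m, 0) = fS N S n k T"
proof (induction n arbitrary: k cnt T m)
  case 0
  obtain c where c: "halted prog c" "ram_output c = T" "V prog (QS S) (1, m, 0) = V prog (QS S) c"
    using done_exists[where Q="QS S", OF QS_hQ 0] by blast
  have k0: "k = 0" using 0 by (simp add: LI_def)
  have "S \<inter> {..<N} = S" using S by auto
  moreover have q: "QS S c \<longleftrightarrow> T = S" using c by (simp add: QS_def)
  moreover have "V prog (QS S) (1, m, 0) = (if T = S then 1 else 0)" using c q by (simp add: V_halted)
  ultimately show ?case using k0 by (simp add: fS_def)
next
  case (Suc n')
  let ?n = "Suc n'"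
  let ?Q = "QS S"
  have vsel: "V prog ?Q (18, m', 0) = fS N S n' (k' - 1) (insert (N - ?n) T')"
    if tl: "LI N h ?n k' cnt' T' m'" and tk: "0 < k'" for k' cnt' T' m'
  proof -
    obtain M where M: "V prog ?Q (18, m', 0) = V prog ?Q (1, M, 0)"
      "LI N h (?n - 1) (k' - 1) (Suc cnt') (insert (N - ?n) T') M"
      using T_sel[where Q="?Q", OF QS_hQ tl tk] LI_sel[OF tl tk] by blast
    have "LI N h n' (k' - 1) (Suc cnt') (insert (N - ?n) T') M" using M(2) by simp
    thus ?thesis using M(1) Suc.IH by simp
  qed
  have vskip: "V prog ?Q (22, m', 0) = fS N S n' k' T'"
    if tl: "LI N h ?n k' cnt' T' m'" and tk: "k' < ?n" for k' cnt' T' m'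
  proof -
    obtain M where M: "V prog ?Q (22, m', 0) = V prog ?Q (1, M, 0)"
      "LI N h (?n - 1) k' cnt' T' M"
      using T_skip[where Q="?Q", OF QS_hQ tl tk] LI_skip[OF tl tk] by blast
    have "LI N h n' k' cnt' T' M" using M(2) by simp
    thus ?thesis using M(1) Suc.IH by simp
  qed
  from Suc.prems have L: "m 0 = ?n" "m 1 = k" "m 2 = N - ?n" "?n \<le> N" "k \<le> ?n" "m 4 = 7 + cnt"
    "cnt + k = h" "T = (\<lambda>j. m (7 + j)) ` {..<cnt}" "card T = cnt" "T \<subseteq> {..<N - ?n}"
    by (auto simp: LI_def)
  define i where "i = N - ?n"
  have Ni: "N - n' = Suc i" using L(4) by (simp add: i_def)
  have Ti: "T \<subseteq> {..<i}" using L(10) by (simp add: i_def)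
  have finS: "finite S" using S(1) finite_subset by blast
  show ?case
  proof (cases "k = 0")
    case True
    have "V prog ?Q (1, m, 0) = V prog ?Q (22, m, 0)"
      using T_loop_skip[where Q="?Q", OF QS_hQ Suc.prems _ True] by simp
    also have "\<dots> = fS N S n' 0 T" using vskip[OF Suc.prems] True by simp
    also have "\<dots> = fS N S ?n 0 T"
    proof -
      have "T = S \<inter> {..<i} \<Longrightarrow> i \<notin> S"
      proof
        assume T: "T = S \<inter> {..<i}" and iS: "i \<in> S"
        have "T \<subseteq> S" using T by auto
        moreover have "card T = card S" using L(7,9) S(2) True by simp
        ultimately have "T = S" using finS card_subset_eq by blast
        thus False using iS Ti by auto
      qed
      thus ?thesis unfolding fS_def Ni i_def[symmetric] using set_noins_iff[OF Ti, of S] by auto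
    qed
    finally show ?thesis using True by simp
  next
    case k0: False
    show ?thesis
    proof (cases "k = ?n")
      case True
      have "V prog ?Q (1, m, 0) = V prog ?Q (18, m(5 := 0), 0)"
        using T_loop_sel[where Q="?Q", OF QS_hQ Suc.prems _ True] by simp
      also have "\<dots> = fS N S n' (k - 1) (insert (N - ?n) T)"
        using vsel[OF LI_upd_low[OF Suc.prems]] k0 by simp
      also have "\<dots> = fS N S ?n k T"
      proof -
        have "T = S \<inter> {..<i} \<Longrightarrow> i \<in> S"
        proof -
          assume T: "T = S \<inter> {..<i}"
          have TS: "T \<subseteq> S" using T by auto
          have "S - T \<subseteq> {i..<N}" using T S(1) by auto
          moreover have "card (S - T) = ?n"
            using card_Diff_subset[OF finite_subset[OF TS finS] TS] L(7,9) S(2) True by simp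
          moreover have "card {i..<N} = ?n" using L(4) by (simp add: i_def)
          ultimately have "S - T = {i..<N}" using card_subset_eq by (metis finite_atLeastLessThan)
          moreover have "i < N" using L(4) by (simp add: i_def)
          ultimately show "i \<in> S" by auto
        qed
        thus ?thesis unfolding fS_def Ni i_def[symmetric] using set_ins_iff[OF Ti, of S] True by auto
      qed
      finally show ?thesis .
    next
      case kn: False
      have kpos: "0 < k" and kless: "k < ?n" using k0 kn L(5) by auto
      define A where "A = fS N S n' (k - 1) (insert i T)"
      define B where "B = fS N S n' k T"
      define tgt where "tgt r = real r / real ?n * A + (1 - real r / real ?n) * B" for r
      have A01: "0 \<le> A" "A \<le> 1" unfolding A_def by (rule fS_ge0, rule fS_le1)
      have B01: "0 \<le> B" "B \<le> 1" unfolding B_def by (rule fS_ge0, rule fS_le1)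
      have tgt01: "0 \<le> tgt r \<and> tgt r \<le> 1" if "r < ?n" for r
      proof -
        have a: "0 \<le> real r / real ?n" "real r / real ?n \<le> 1" using that by auto
        have "tgt r \<le> real r / real ?n * 1 + (1 - real r / real ?n) * 1"
          unfolding tgt_def using A01 B01 a by (intro add_mono mult_left_mono) auto
        moreover have "0 \<le> tgt r" unfolding tgt_def using A01 B01 a by simp
        ultimately show ?thesis by simp
      qed
      have bound: "\<forall>r m'. BLI N h ?n k cnt T r m' \<longrightarrow> \<bar>V prog ?Q (7, m', 0) - tgt r\<bar> \<le> 2 / 2 ^ j" for j
      proof (induction j)
        case 0
        show ?case
        proof (intro allI impI)
          fix r m' assume "BLI N h ?n k cnt T r m'"
          hence "r < ?n" by (simp add: BLI_def)
          thus "\<bar>V prog ?Q (7, m', 0) - tgt r\<bar> \<le> 2 / 2 ^ 0"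
            using tgt01[of r] V_nonneg[of prog ?Q "(7, m', 0)"] V_le1[of prog ?Q "(7, m', 0)"] by (auto simp: abs_le_iff)
        qed
      next
        case (Suc j)
        show ?case
        proof (intro allI impI)
          fix r m' assume Bm: "BLI N h ?n k cnt T r m'"
          hence rn: "r < ?n" by (simp add: BLI_def)
          obtain m1 m2 where m12: "LI N h ?n k cnt T m1"
            "BLI N h ?n k cnt T (if ?n \<le> r + r then r + r - ?n else r + r) m2"
            "V prog ?Q (7, m', 0) = (V prog ?Q (if ?n \<le> r + r then 18 else 22, m1, 0) + V prog ?Q (7, m2, 0)) / 2"
            using BL_step[where Q="?Q", OF QS_hQ QS_hQ2 Bm] unfolding QS_addc by blast
          let ?r' = "if ?n \<le> r + r then r + r - ?n else r + r"
          have ih: "\<bar>V prog ?Q (7, m2, 0) - tgt ?r'\<bar> \<le> 2 / 2 ^ j" using Suc.IH m12(2) by blast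
          have key: "V prog ?Q (7, m', 0) - tgt r = (V prog ?Q (7, m2, 0) - tgt ?r') / 2"
          proof (cases "?n \<le> r + r")
            case True
            have v1: "V prog ?Q (18, m1, 0) = A" unfolding A_def i_def using vsel[OF m12(1) kpos] .
            have d: "real (r + r - ?n) = real r + real r - real ?n" using True by (simp add: of_nat_diff)
            have "tgt r = (A + tgt (r + r - ?n)) / 2"
              unfolding tgt_def d by (rule tgt_a) simp
            then show ?thesis using m12(3) v1 True by simp
          next
            case False
            have v1: "V prog ?Q (22, m1, 0) = B" unfolding B_def using vskip[OF m12(1) kless] .
            have "tgt r = (B + tgt (r + r)) / 2"
              unfolding tgt_def of_nat_add by (rule tgt_b) simp
            then show ?thesis using m12(3) v1 False by simp
          qed
          show "\<bar>V prog ?Q (7, m', 0) - tgt r\<bar> \<le> 2 / 2 ^ Suc j"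
            using ih unfolding key by simp
        qed
      qed
      have blv: "V prog ?Q (7, m', 0) = tgt r" if "BLI N h ?n k cnt T r m'" for r m'
        using zero_by_bound[of "V prog ?Q (7, m', 0) - tgt r"] bound that by auto
      have "V prog ?Q (1, m, 0) = V prog ?Q (7, m(5 := ?n - k, 3 := k), 0)"
        by (rule T_loop_bl[where Q="?Q", OF QS_hQ Suc.prems kpos kless])
      also have "\<dots> = tgt k" by (rule blv[OF BLI_start[OF Suc.prems kpos kless]])
      also have "\<dots> = fS N S ?n k T"
        unfolding tgt_def A_def B_def fS_def Ni i_def[symmetric]
        by (rule comb_mid[OF Ti kpos kless])
      finally show ?thesis .
    qed
  qed
qed

lemma LI_init: "h \<le> N \<Longrightarrow> LI N h N h 0 {} ((\<lambda>_. 0)(0 := N, 1 := h, 4 := 7))"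
  by (simp add: LI_def)

lemma run_exe: "run p \<omega> N h t = exe p \<omega> (init_config N h) t"
  by (simp add: run_def exe_def)

theorem uniform:
  assumes "h \<le> N" "S \<subseteq> {..<N}" "card S = h"
  shows "measure coins {\<omega> \<in> space coins. \<exists>t. halted prog (run prog \<omega> N h t) \<and> ram_output (run prog \<omega> N h t) = S}
     = 1 / real (N choose h)"
proof -
  have "measure coins {\<omega> \<in> space coins. \<exists>t. halted prog (run prog \<omega> N h t) \<and> ram_output (run prog \<omega> N h t) = S}
     = V prog (QS S) (init_config N h)"
    by (simp add: V_def QS_def run_exe)
  also have "\<dots> = V prog (QS S) (1, (\<lambda>_. 0)(0 := N, 1 := h, 4 := 7), 0)"
    unfolding init_config_def by (rule T_init[where Q="QS S", OF QS_hQ])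
  also have "\<dots> = fS N S N h {}"
    by (rule uniform_loop[OF assms(2,3) LI_init[OF assms(1)]])
  also have "\<dots> = 1 / real (N choose h)" by (simp add: fS_def)
  finally show ?thesis .
qed

definition QK :: "nat \<Rightarrow> config \<Rightarrow> bool" where
  "QK K c = (K \<le> snd (snd c))"

lemma QK_hQ: "0 < K \<Longrightarrow> \<not> QK K (pc, m, 0)"
  by (simp add: QK_def)

lemma QK_addc: "QK (Suc K) \<circ> addc = QK K"
  by (rule ext) (simp add: QK_def addc_def)

lemma sel_to_loop:
  assumes hQ: "\<And>pc m. \<not> halted prog (pc, m, 0) \<Longrightarrow> \<not> Q (pc, m, 0)"
    and tl: "LI N h n k cnt T m" and tk: "0 < k"
  shows "\<exists>M. LI N h (n - 1) (k - 1) (Suc cnt) (insert (N - n) T) M \<and> V prog Q (18, m, 0) = V prog Q (1, M, 0)"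
  using T_sel[where Q=Q, OF hQ tl tk] LI_sel[OF tl tk] by blast

lemma skip_to_loop:
  assumes hQ: "\<And>pc m. \<not> halted prog (pc, m, 0) \<Longrightarrow> \<not> Q (pc, m, 0)"
    and tl: "LI N h n k cnt T m" and tk: "k < n"
  shows "\<exists>M. LI N h (n - 1) k cnt T M \<and> V prog Q (22, m, 0) = V prog Q (1, M, 0)"
  using T_skip[where Q=Q, OF hQ tl tk] LI_skip[OF tl tk] by blast

lemma pow_ge1: "(1::real) \<le> 3 ^ n" by simp

lemma tail_main:
  "(\<forall>n k cnt T m. LI N h n k cnt T m \<longrightarrow> V prog (QK K) (1, m, 0) \<le> 3 ^ n * (2 / 3) ^ K) \<and>
   (\<forall>n k cnt T r m. BLI N h n k cnt T r m \<longrightarrow> V prog (QK K) (7, m, 0) \<le> 3 ^ n * (2 / 3) ^ K)"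
proof (induction K)
  case 0
  have "V prog (QK 0) c \<le> 3 ^ n * (2 / 3) ^ 0" for c and n :: nat
    using order_trans[OF V_le1[of prog "QK 0" c] pow_ge1[of n]] by simp
  then show ?case by blast
next
  case (Suc K')
  let ?K = "Suc K'"
  have hQK: "\<And>pc m. \<not> halted prog (pc, m, 0) \<Longrightarrow> \<not> QK ?K (pc, m, 0)" by (simp add: QK_hQ)
  have BL: "V prog (QK ?K) (7, m, 0) \<le> 3 ^ n * (2 / 3) ^ ?K" if B: "BLI N h n k cnt T r m" for n k cnt T r m
  proof -
    have n1: "1 \<le> n" using B by (simp add: BLI_def)
    have p3: "(3::real) ^ n = 3 * 3 ^ (n - 1)" using n1 by (cases n) auto
    show ?thesis
    proof (cases "K' = 0")
      case True
      have "(1::real) \<le> 3 ^ (n - 1)" by simp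
      hence "(1::real) \<le> 2 * 3 ^ (n - 1)" by linarith
      hence "1 \<le> 3 ^ n * (2 / 3 :: real) ^ ?K" using True p3 by simp
      thus ?thesis using V_le1[of prog "QK ?K" "(7, m, 0)"] by linarith
    next
      case False
      have hQK': "\<And>pc m. \<not> halted prog (pc, m, 0) \<Longrightarrow> \<not> QK K' (pc, m, 0)" using False by (simp add: QK_hQ)
      have hQK2: "\<And>pc m. \<not> halted prog (pc, m, 0) \<Longrightarrow> \<not> (QK ?K \<circ> addc) (pc, m, 0)"
        using hQK' by (simp add: QK_addc)
      obtain m1 m2 where m12: "LI N h n k cnt T m1"
        "BLI N h n k cnt T (if n \<le> r + r then r + r - n else r + r) m2"
        "V prog (QK ?K) (7, m, 0) = (V prog (QK K') (if n \<le> r + r then 18 else 22, m1, 0) + V prog (QK K') (7, m2, 0)) / 2"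
        using BL_step[where Q="QK ?K", OF hQK hQK2 B] unfolding QK_addc by blast
      have k: "0 < k" "k < n" using B by (auto simp: BLI_def)
      have e1: "V prog (QK K') (if n \<le> r + r then 18 else 22, m1, 0) \<le> 3 ^ (n - 1) * (2 / 3) ^ K'"
      proof (cases "n \<le> r + r")
        case True
        obtain M where M: "LI N h (n - 1) (k - 1) (Suc cnt) (insert (N - n) T) M"
          "V prog (QK K') (18, m1, 0) = V prog (QK K') (1, M, 0)"
          using sel_to_loop[where Q="QK K'", OF hQK' m12(1) k(1)] by blast
        show ?thesis using True M Suc.IH by auto
      next
        case False
        obtain M where M: "LI N h (n - 1) k cnt T M"
          "V prog (QK K') (22, m1, 0) = V prog (QK K') (1, M, 0)"
          using skip_to_loop[where Q="QK K'", OF hQK' m12(1) k(2)] by blast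
        show ?thesis using False M Suc.IH by auto
      qed
      have e2: "V prog (QK K') (7, m2, 0) \<le> 3 ^ n * (2 / 3) ^ K'" using m12(2) Suc.IH by blast
      have "V prog (QK ?K) (7, m, 0) \<le> (3 ^ (n - 1) * (2 / 3) ^ K' + 3 ^ n * (2 / 3) ^ K') / 2"
        using m12(3) e1 e2 by simp
      also have "\<dots> = 3 ^ n * (2 / 3) ^ ?K" using p3 by (simp add: field_simps)
      finally show ?thesis .
    qed
  qed
  have LP: "V prog (QK ?K) (1, m, 0) \<le> 3 ^ n * (2 / 3) ^ ?K" if "LI N h n k cnt T m" for n k cnt T m
    using that
  proof (induction n arbitrary: k cnt T m)
    case 0
    obtain c where c: "halted prog c" "ram_output c = T" "snd (snd c) = 0" "V prog (QK ?K) (1, m, 0) = V prog (QK ?K) c"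
      using done_exists[where Q="QK ?K", OF hQK 0] by blast
    have "V prog (QK ?K) c = 0" using c by (simp add: V_halted QK_def)
    then show ?case using c by simp
  next
    case (Suc n')
    let ?n = "Suc n'"
    have k: "k \<le> ?n" using Suc.prems by (simp add: LI_def)
    have mono: "3 ^ n' * (2 / 3) ^ ?K \<le> 3 ^ ?n * (2 / 3 :: real) ^ ?K" by simp
    show ?case
    proof (cases "k = 0")
      case True
      obtain M where M: "LI N h n' k cnt T M" "V prog (QK ?K) (22, m, 0) = V prog (QK ?K) (1, M, 0)"
        using skip_to_loop[where Q="QK ?K", OF hQK Suc.prems] True by auto
      have "V prog (QK ?K) (1, m, 0) = V prog (QK ?K) (22, m, 0)"
        using T_loop_skip[where Q="QK ?K", OF hQK Suc.prems _ True] by simp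
      then show ?thesis using M Suc.IH[OF M(1)] mono by linarith
    next
      case k0: False
      show ?thesis
      proof (cases "k = ?n")
        case True
        have L5: "LI N h ?n k cnt T (m(5 := 0))" by (rule LI_upd_low[OF Suc.prems]) simp
        obtain M where M: "LI N h n' (k - 1) (Suc cnt) (insert (N - ?n) T) M"
          "V prog (QK ?K) (18, m(5 := 0), 0) = V prog (QK ?K) (1, M, 0)"
          using sel_to_loop[where Q="QK ?K", OF hQK L5] k0 by auto
        have "V prog (QK ?K) (1, m, 0) = V prog (QK ?K) (18, m(5 := 0), 0)"
          using T_loop_sel[where Q="QK ?K", OF hQK Suc.prems _ True] by simp
        then show ?thesis using M Suc.IH[OF M(1)] mono by linarith
      next
        case False
        have kk: "0 < k" "k < ?n" using k0 False k by auto
        have "V prog (QK ?K) (1, m, 0) = V prog (QK ?K) (7, m(5 := ?n - k, 3 := k), 0)"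
          by (rule T_loop_bl[where Q="QK ?K", OF hQK Suc.prems kk])
        then show ?thesis using BL[OF BLI_start[OF Suc.prems kk]] by simp
      qed
    qed
  qed
  show ?case using BL LP by blast
qed

theorem tail:
  assumes "h \<le> N"
  shows "measure coins {\<omega>. \<exists>t. K \<le> bits_used (run prog \<omega> N h t)} \<le> 3 ^ N * (2 / 3) ^ K"
proof -
  have "measure coins {\<omega>. \<exists>t. K \<le> bits_used (run prog \<omega> N h t)} = V prog (QK K) (init_config N h)"
    by (simp add: V_alt QK_def run_exe bits_used_def)
  also have "\<dots> = V prog (QK K) (1, (\<lambda>_. 0)(0 := N, 1 := h, 4 := 7), 0)"
  proof (cases "K = 0")
    case True
    have "V prog (QK K) c = 1" for c
      using True prob_space.prob_space[OF prob_coins] by (simp add: V_alt QK_def)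
    then show ?thesis by simp
  next
    case False
    then show ?thesis unfolding init_config_def
      by (intro T_init[where Q="QK K"]) (simp add: QK_hQ)
  qed
  also have "\<dots> \<le> 3 ^ N * (2 / 3) ^ K"
    using tail_main[of N h K] LI_init[OF assms] by blast
  finally show ?thesis .
qed

definition Cm :: "nat \<Rightarrow> nat \<Rightarrow> (nat \<Rightarrow> nat) \<Rightarrow> bool" where
  "Cm N h m \<longleftrightarrow> m 0 \<le> N \<and> m 2 = N - m 0 \<and> m 1 \<le> m 0 \<and> m 1 \<le> h \<and> m 4 = 7 + (h - m 1)"

definition pcinv :: "nat \<Rightarrow> nat \<Rightarrow> nat \<Rightarrow> (nat \<Rightarrow> nat) \<Rightarrow> bool" where
"pcinv N h pc m \<longleftrightarrow> (
  if pc = 0 then m 0 = N \<and> m 1 = h \<and> m 2 = 0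
  else if pc = 1 then Cm N h m
  else if pc = 2 then Cm N h m \<and> 0 < m 0
  else if pc = 3 then Cm N h m \<and> 0 < m 1
  else if pc = 4 then Cm N h m \<and> 0 < m 1 \<and> m 5 = m 0 - m 1
  else if pc = 5 then Cm N h m \<and> 0 < m 1 \<and> m 1 < m 0
  else if pc = 6 then Cm N h m \<and> 0 < m 1 \<and> m 1 < m 0 \<and> m 3 = 0
  else if pc = 7 then Cm N h m \<and> 0 < m 1 \<and> m 1 < m 0 \<and> m 3 < m 0
  else if pc = 8 \<or> pc = 9 then Cm N h m \<and> 0 < m 1 \<and> m 1 < m 0 \<and> m 3 < 2 * m 0
  else if pc = 10 then Cm N h m \<and> 0 < m 1 \<and> m 1 < m 0 \<and> m 3 < 2 * m 0 \<and> m 5 = m 0 - m 3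
  else if pc = 11 \<or> pc = 12 \<or> pc = 15 \<or> pc = 16 then Cm N h m \<and> 0 < m 1 \<and> m 1 < m 0 \<and> m 3 < m 0
  else if pc = 13 \<or> pc = 17 then Cm N h m \<and> 0 < m 1 \<and> m 1 < m 0 \<and> m 3 < m 0 \<and> m 5 = 0
  else if pc = 14 then Cm N h m \<and> 0 < m 1 \<and> m 1 < m 0 \<and> m 0 \<le> m 3 \<and> m 3 < 2 * m 0
  else if pc = 18 \<or> pc = 19 then Cm N h m \<and> 0 < m 1
  else if pc = 20 then Cm N h m \<and> 0 < m 1 \<and> m 5 = 1
  else if pc = 21 then m 0 \<le> N \<and> m 2 = N - m 0 \<and> m 1 \<le> m 0 \<and> m 1 \<le> h \<and> 0 < m 1 \<and> m 4 = 8 + (h - m 1) \<and> m 5 = 1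
  else if pc = 22 then Cm N h m \<and> m 1 < m 0
  else if pc = 23 then Cm N h m \<and> m 1 < m 0 \<and> m 5 = 1
  else if pc = 24 then m 0 \<le> N \<and> m 2 = N - m 0 + 1 \<and> m 1 < m 0 \<and> m 1 \<le> h \<and> m 4 = 7 + (h - m 1) \<and> m 5 = 1
  else if pc = 25 then Cm N h m
  else if pc = 26 then Cm N h m \<and> m 5 = 0
  else pc < 42)"

definition wt :: "nat \<Rightarrow> nat" where
  "wt pc = (if pc = 7 \<or> pc = 8 then pc + 15 else if 9 \<le> pc \<and> pc \<le> 17 then pc + 3
     else if pc = 25 then 0 else if pc = 26 then 1 else if pc < 27 then pc + 2 else pc)"

definition bnd :: "nat \<Rightarrow> (nat \<Rightarrow> nat) \<Rightarrow> bool" where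
  "bnd N m \<longleftrightarrow> (\<forall>a. m a \<le> 2 * N + 8)"

lemma bnd_upd[simp]: "bnd N m \<Longrightarrow> v \<le> 2 * N + 8 \<Longrightarrow> bnd N (m(r := v))"
  by (simp add: bnd_def)

lemma bnd_le[simp]: "bnd N m \<Longrightarrow> m a \<le> 2 * N + 8"
  by (simp add: bnd_def)

lemma bnd_diff[simp]: "bnd N m \<Longrightarrow> m a - x \<le> 2 * N + 8"
  by (simp add: bnd_def le_diff_iff' le_trans[OF diff_le_self])

definition Inv :: "nat \<Rightarrow> nat \<Rightarrow> nat \<Rightarrow> config \<Rightarrow> bool" where
  "Inv N h t c \<longleftrightarrow> bnd N (fst (snd c)) \<and> pcinv N h (fst c) (fst (snd c)) \<and>
     (\<not> halted prog c \<longrightarrow> t \<le> 12 * snd (snd c) + 30 * (if 27 \<le> fst c then N else N - fst (snd c) 0) + wt (fst c))"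

lemma Inv_step:
  assumes hN: "h \<le> N" and I: "Inv N h t (pc, m, k)"
  shows "Inv N h (Suc t) (step prog \<omega> (pc, m, k))"
proof (cases "halted prog (pc, m, k)")
  case True
  then show ?thesis using I by (simp add: step_def Inv_def)
next
  case False
  hence "pc < 42" by (simp add: halted_def)
  hence "pc = 0 \<or> pc = 1 \<or> pc = 2 \<or> pc = 3 \<or> pc = 4 \<or> pc = 5 \<or> pc = 6 \<or> pc = 7 \<or> pc = 8 \<or> pc = 9 \<or> pc = 10 \<or> pc = 11 \<or> pc = 12 \<or> pc = 13 \<or> pc = 14 \<or> pc = 15 \<or> pc = 16 \<or> pc = 17 \<or> pc = 18 \<or> pc = 19 \<or> pc = 20 \<or> pc = 21 \<or> pc = 22 \<or> pc = 23 \<or> pc = 24 \<or> pc = 25 \<or> pc = 26 \<or> pc = 27 \<or> pc = 28 \<or> pc = 29 \<or> pc = 30 \<or> pc = 31 \<or> pc = 32 \<or> pc = 33 \<or> pc = 34 \<or> pc = 35 \<or> pc = 36 \<or> pc = 37 \<or> pc = 38 \<or> pc = 39 \<or> pc = 40 \<or> pc = 41" by presburger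
  then show ?thesis using I False hN
    apply (elim disjE)
    apply (simp_all add: Inv_def pcinv_def Cm_def wt_def step_def halted_def)
    apply auto
    done
qed

lemma Inv_run: "h \<le> N \<Longrightarrow> Inv N h t (run prog \<omega> N h t)"
proof (induction t)
  case 0
  then show ?case
    by (simp add: run_def init_config_def Inv_def pcinv_def wt_def bnd_def halted_def)
next
  case (Suc t)
  obtain pc m k where e: "run prog \<omega> N h t = (pc, m, k)" by (cases "run prog \<omega> N h t") auto
  have "run prog \<omega> N h (Suc t) = step prog \<omega> (run prog \<omega> N h t)" by (simp add: run_def)
  then show ?case using Inv_step[OF Suc.prems, of t pc m k \<omega>] Suc.IH[OF Suc.prems] e by simp
qed

lemma pow3_ge: "2 * N + 8 \<le> (N + 2) ^ 3" for N :: nat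
proof -
  have "4 \<le> (N + 2) ^ 2" by (simp add: power2_eq_square)
  hence "(N + 2) * 4 \<le> (N + 2) * (N + 2) ^ 2" by (intro mult_left_mono) auto
  thus ?thesis by (simp add: power3_eq_cube power2_eq_square)
qed

theorem word_bounded_prog: "word_bounded prog 3"
  unfolding word_bounded_def
proof (intro allI impI)
  fix N h :: nat and \<omega> t a assume "h \<le> N"
  hence "bnd N (fst (snd (run prog \<omega> N h t)))" using Inv_run[of h N t \<omega>] by (simp add: Inv_def)
  hence "fst (snd (run prog \<omega> N h t)) a \<le> 2 * N + 8" by simp
  thus "fst (snd (run prog \<omega> N h t)) a \<le> (N + 2) ^ 3" using pow3_ge[of N] by linarith
qed

lemma time_bound:
  assumes "h \<le> N" "\<not> halted prog (run prog \<omega> N h t)"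
  shows "t \<le> 12 * bits_used (run prog \<omega> N h t) + 30 * N + 41"
proof -
  obtain pc m k where e: "run prog \<omega> N h t = (pc, m, k)" by (cases "run prog \<omega> N h t") auto
  have I: "Inv N h t (pc, m, k)" using Inv_run[OF assms(1), of t \<omega>] e by simp
  have "pc < 42" using assms(2) e by (simp add: halted_def)
  hence "wt pc \<le> 41" by (simp add: wt_def)
  moreover have "t \<le> 12 * k + 30 * (if 27 \<le> pc then N else N - m 0) + wt pc"
    using I assms(2) e unfolding Inv_def by auto
  ultimately show ?thesis using e by (simp add: bits_used_def split: if_splits)
qed

lemma num_bound: "(3::real) ^ N * (2 / 3) ^ (60 * N + 1) \<le> exp (- sqrt (real N))"
proof -
  have a1: "(2 / 3 :: real) ^ (60 * N + 1) \<le> (2 / 3) ^ (60 * N)"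
    by (rule power_decreasing) auto
  have a2: "(2 / 3 :: real) ^ (60 * N) = ((2 / 3) ^ 60) ^ N"
    by (simp add: power_mult)
  have a: "(3::real) ^ N * (2 / 3) ^ (60 * N + 1) \<le> (3 * (2 / 3) ^ 60) ^ N"
    using a1 unfolding a2 power_mult_distrib by (intro mult_left_mono) auto
  have e1: "1 / 3 \<le> exp (-1::real)"
  proof -
    have "exp (-1::real) = 1 / exp 1" by (simp add: exp_minus field_simps)
    also have "1 / 3 \<le> 1 / exp (1::real)" using exp_le by (intro divide_left_mono) auto
    finally show ?thesis by simp
  qed
  have b: "3 * (2 / 3 :: real) ^ 60 \<le> exp (-1)"
  proof -
    have "3 * (2 / 3 :: real) ^ 60 \<le> 1 / 3" by (simp add: power_divide)
    thus ?thesis using e1 by linarith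
  qed
  have c: "(3 * (2 / 3 :: real) ^ 60) ^ N \<le> exp (-1) ^ N"
    by (rule power_mono[OF b]) simp
  have d: "exp (-1::real) ^ N = exp (- real N)"
    by (simp add: exp_of_nat_mult[symmetric])
  have s: "sqrt (real N) \<le> real N"
  proof (cases "N = 0")
    case True then show ?thesis by simp
  next
    case False
    hence "real N \<le> real N * real N" by simp
    hence "sqrt (real N) \<le> sqrt (real N * real N)" by (rule real_sqrt_le_mono)
    thus ?thesis by (simp add: real_sqrt_mult_self)
  qed
  have "exp (- real N) \<le> exp (- sqrt (real N))" using s by simp
  thus ?thesis using a c d by linarith
qed

lemma sets_good: "{\<omega> \<in> space coins. \<exists>t. R t (run p \<omega> N h t)} \<in> sets coins"
proof -
  have "{\<omega> \<in> space coins. \<exists>t. R t (run p \<omega> N h t)} = (\<Union>t. {\<omega>. R t (exe p \<omega> (init_config N h) t)})"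
    by (auto simp: run_exe)
  also have "\<dots> \<in> sets coins" using sets_exe by blast
  finally show ?thesis .
qed

lemma sets_bad: "{\<omega>. \<exists>t. K \<le> bits_used (run p \<omega> N h t)} \<in> sets coins"
  using sets_V[of "\<lambda>c. K \<le> bits_used c" p "init_config N h"] by (simp add: run_exe)

theorem good_bound:
  assumes hN: "h \<le> N"
  shows "measure coins {\<omega> \<in> space coins. \<exists>t. real t \<le> 792 * real (N + 1) \<and>
             halted prog (run prog \<omega> N h t) \<and> bits_used (run prog \<omega> N h t) \<le> 60 * N}
          \<ge> 1 - 1 * exp (- sqrt (real N))"
proof -
  interpret P: prob_space coins by (rule prob_coins)
  let ?G = "{\<omega> \<in> space coins. \<exists>t. real t \<le> 792 * real (N + 1) \<and>
             halted prog (run prog \<omega> N h t) \<and> bits_used (run prog \<omega> N h t) \<le> 60 * N}"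
  let ?B = "{\<omega>. \<exists>t. 60 * N + 1 \<le> bits_used (run prog \<omega> N h t)}"
  have Gs: "?G \<in> sets coins" using sets_good[of "\<lambda>t c. real t \<le> 792 * real (N + 1) \<and> halted prog c \<and> bits_used c \<le> 60 * N"] by simp
  have Bs: "?B \<in> sets coins" by (rule sets_bad)
  have sub: "space coins - ?B \<subseteq> ?G"
  proof
    fix \<omega> assume a: "\<omega> \<in> space coins - ?B"
    have bits: "\<forall>t. bits_used (run prog \<omega> N h t) \<le> 60 * N"
    proof
      fix t
      from a have "\<not> 60 * N + 1 \<le> bits_used (run prog \<omega> N h t)" by auto
      thus "bits_used (run prog \<omega> N h t) \<le> 60 * N" by simp
    qed
    let ?T = "750 * N + 42"
    have hl: "halted prog (run prog \<omega> N h ?T)"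
    proof (rule ccontr)
      assume "\<not> halted prog (run prog \<omega> N h ?T)"
      from time_bound[OF hN this] bits[rule_format, of ?T] show False by linarith
    qed
    have "real ?T \<le> 792 * real (N + 1)" by simp
    hence "real ?T \<le> 792 * real (N + 1) \<and> halted prog (run prog \<omega> N h ?T) \<and> bits_used (run prog \<omega> N h ?T) \<le> 60 * N"
      using hl bits by blast
    hence ex: "\<exists>t. real t \<le> 792 * real (N + 1) \<and> halted prog (run prog \<omega> N h t) \<and> bits_used (run prog \<omega> N h t) \<le> 60 * N"
      by (rule exI)
    show "\<omega> \<in> ?G"
    proof (rule CollectI, rule conjI)
      show "\<omega> \<in> space coins" by simp
    qed (rule ex)
  qed
  have "1 - 1 * exp (- sqrt (real N)) \<le> 1 - measure coins ?B"
    using tail[OF hN, of "60 * N + 1"] num_bound[of N] by simp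
  also have "\<dots> = measure coins (space coins - ?B)" using P.prob_compl[OF Bs] by simp
  also have "\<dots> \<le> measure coins ?G" by (rule P.finite_measure_mono[OF sub Gs])
  finally show ?thesis .
qed

theorem lemma7p1:
  shows "\<exists>(p :: prog) (d :: nat) (C :: real) (D :: real).
     word_bounded p d \<and>
     (\<forall>N h. h \<le> N \<longrightarrow>
        (\<forall>S. S \<subseteq> {..<N} \<and> card S = h \<longrightarrow>
           measure coins {\<omega> \<in> space coins. \<exists>t. halted p (run p \<omega> N h t) \<and> ram_output (run p \<omega> N h t) = S}
             = 1 / real (N choose h)) \<and>
        measure coins {\<omega> \<in> space coins. \<exists>t. real t \<le> C * real (N + 1) \<and>
             halted p (run p \<omega> N h t) \<and> bits_used (run p \<omega> N h t) \<le> 60 * N}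
          \<ge> 1 - D * exp (- sqrt (real N)))"
proof -
  have W: "word_bounded prog 3" by (rule word_bounded_prog)
  have U: "\<forall>N h. h \<le> N \<longrightarrow>
        (\<forall>S. S \<subseteq> {..<N} \<and> card S = h \<longrightarrow>
           measure coins {\<omega> \<in> space coins. \<exists>t. halted prog (run prog \<omega> N h t) \<and> ram_output (run prog \<omega> N h t) = S}
             = 1 / real (N choose h)) \<and>
        measure coins {\<omega> \<in> space coins. \<exists>t. real t \<le> 792 * real (N + 1) \<and>
             halted prog (run prog \<omega> N h t) \<and> bits_used (run prog \<omega> N h t) \<le> 60 * N}
          \<ge> 1 - 1 * exp (- sqrt (real N))"
  proof (intro allI impI conjI)
    fix N h S assume "h \<le> N" "S \<subseteq> {..<N} \<and> card S = h"
    then show "measure coins {\<omega> \<in> space coins. \<exists>t. halted prog (run prog \<omega> N h t) \<and> ram_output (run prog \<omega> N h t) = S}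
             = 1 / real (N choose h)" using uniform by blast
  next
    fix N h :: nat assume "h \<le> N"
    then show "measure coins {\<omega> \<in> space coins. \<exists>t. real t \<le> 792 * real (N + 1) \<and>
             halted prog (run prog \<omega> N h t) \<and> bits_used (run prog \<omega> N h t) \<le> 60 * N}
          \<ge> 1 - 1 * exp (- sqrt (real N))" by (rule good_bound)
  qed
  show ?thesis
    by (intro exI[of _ prog] exI[of _ "3::nat"] exI[of _ "792::real"] exI[of _ "1::real"]) (rule conjI[OF W U])
qed

end
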